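(* Let $T$ be a hedge of height $H$, let $\Lambda=(\alpha_1,\alpha_2,\beta_2,\beta_3,\beta_4)\in\mathcal B$ and let $A\in\mathcal{PH}(C^{\Lambda}_{H+1},T)$. Then $$\mathrm{mult}(\alpha_j,A)=\sum_{\substack{i\ge j\\ i\equiv j \ (\mathrm{mod}\ 2)}}\ell_i(T)\quad(j=1,2),\qquad \mathrm{mult}(\beta_j,A)=\sum_{\substack{i\ge j\\ i\equiv j\ (\mathrm{mod}\ 3)}}\ell_i(T)\quad(j=2,3,4).$$
   Context: Hedges: a rooted tree is a tree with a distinguished root; $y$ is a child of adjacent $z$ if the root-to-$y$ path passes through $z$; a leaf is a non-root vertex of degree 1 (in $P_1$ the single vertex is root and leaf). A hedge is a rooted tree that is $P_1$ or in which all leaves are at equal distance from the root. The height $\mathrm{h}(u)$ of a vertex is its distance to a nearest leaf; the height of the hedge is that of its root; $V_i(T)$ is the set of vertices of height $i$ and $\ell_i(T)=|V_{i-1}(T)|-|V_i(T)|$ for $i\ge1$. $P_n$ is the path $1-\cdots-n$ rooted at $1$ (vertex $j$ has height $n-j$). $\mathcal R(T)$: real matrices indexed by $V(T)$ with $a_{ij}\ne0$ iff $\{i,j\}\in E(T)$ for $i\neq j$, $a_{ij}a_{ji}>0$ on edges, diagonal arbitrary. $\mathrm{mult}(\lambda,A)$ is the algebraic multiplicity. Path-to-hedge: for $C=(c_{ij})\in\mathcal R(P_{H+1})$ and $v\in V(T)$ let $v'=H+1-\mathrm h(v)$; $\mathcal{PH}(C,T)$ is the set of $A\in\mathcal R(T)$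 with $a_{vv}=c_{v'v'}$ for all $v$ and $\sum_{u\text{ child of }v}a_{vu}a_{uv}=c_{v',v'+1}c_{v'+1,v'}$ for all non-leaf $v$. $\mathcal B$ is the set of $(\alpha_1,\alpha_2,\beta_2,\beta_3,\beta_4)\in\mathbb R^5$ with distinct entries satisfying one of: $\beta_2<\alpha_1<\alpha_2<\beta_3<\beta_4$; $\beta_2<\beta_4<\alpha_1<\alpha_2<\beta_3$; $\beta_4<\beta_2<\alpha_1<\alpha_2<\beta_3$ and $\alpha_2+\beta_2>\beta_4+\beta_3$; $\beta_3<\beta_2<\alpha_1<\alpha_2<\beta_4$ and $\alpha_2+\beta_2<\beta_4+\beta_3$; $\beta_3<\beta_2<\beta_4<\alpha_1<\alpha_2$; $\beta_4<\beta_3<\beta_2<\alpha_1<\alpha_2$; $\beta_4<\beta_3<\alpha_2<\alpha_1<\beta_2$; $\beta_3<\alpha_2<\alpha_1<\beta_4<\beta_2$; $\beta_3<\alpha_2<\alpha_1<\beta_2<\beta_4$ and $\alpha_2+\beta_2<\beta_4+\beta_3$; $\beta_4<\alpha_2<\alpha_1<\beta_2<\beta_3$ and $\alpha_2+\beta_2>\beta_4+\beta_3$; $\alpha_2<\alpha_1<\beta_4<\beta_2<\beta_3$; $\alpha_2<\alpha_1<\beta_2<\beta_3<\beta_4$. For $\Lambda\in\mathcal B$ and $n\ge1$, $C^{\Lambda}_n$ is the $n\times n$ tridiagonal matrix with diagonal $(a_n,a_{n-1},\dots,a_1)$, superdiagonal $(b_n,\dots,b_2)$ and all subdiagonal entries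 $1$, where $a_i=\alpha_1$ for odd $i$, $a_2=-\alpha_1+\alpha_2+\beta_2$, $a_i=\alpha_2$ for even $i>2$, $b_2=(\beta_2-\alpha_1)(\alpha_1-\alpha_2)$, $b_3=(\beta_3-\alpha_2)(\beta_3-\beta_2)$, $b_4=\frac{(\beta_4-\alpha_1)(\beta_3-\beta_4)(\alpha_2+\beta_2-\beta_3-\beta_4)}{\beta_4-\beta_2}$, and $b_i=(\beta_j-\alpha_1)(\beta_j-\alpha_2)$ for $i>4$ with $j\in\{2,3,4\}$, $i\equiv j\pmod 3$. (These $b_i$ are positive for $\Lambda\in\mathcal B$, so $C^\Lambda_n\in\mathcal R(P_n)$.) *)

theory Defs
  imports "Jordan_Normal_Form.Char_Poly"
begin

definition edges :: "nat \<Rightarrow> (nat \<Rightarrow> nat \<Rightarrow> bool) \<Rightarrow> nat set set" where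
  "edges n E = {{i, j} | i j. i < n \<and> j < n \<and> E i j}"

definition is_walk :: "(nat \<Rightarrow> nat \<Rightarrow> bool) \<Rightarrow> nat list \<Rightarrow> bool" where
  "is_walk E xs \<longleftrightarrow> xs \<noteq> [] \<and> (\<forall>i. Suc i < length xs \<longrightarrow> E (xs ! i) (xs ! Suc i))"

definition connected_by :: "(nat \<Rightarrow> nat \<Rightarrow> bool) \<Rightarrow> nat \<Rightarrow> nat \<Rightarrow> bool" where
  "connected_by E u v \<longleftrightarrow> (\<exists>xs. is_walk E xs \<and> hd xs = u \<and> last xs = v)"

definition gdist :: "(nat \<Rightarrow> nat \<Rightarrow> bool) \<Rightarrow> nat \<Rightarrow> nat \<Rightarrow> nat" where
  "gdist E u v = (LEAST k. \<exists>xs. is_walk E xs \<and> hd xs = u \<and> last xs = v \<and> length xs = Suc k)"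

definition is_tree :: "nat \<Rightarrow> (nat \<Rightarrow> nat \<Rightarrow> bool) \<Rightarrow> bool" where
  "is_tree n E \<longleftrightarrow> n \<ge> 1
     \<and> (\<forall>i j. E i j \<longrightarrow> i < n \<and> j < n \<and> i \<noteq> j \<and> E j i)
     \<and> (\<forall>i<n. \<forall>j<n. connected_by E i j)
     \<and> card (edges n E) = n - 1"

definition is_rooted_tree :: "nat \<Rightarrow> (nat \<Rightarrow> nat \<Rightarrow> bool) \<Rightarrow> nat \<Rightarrow> bool" where
  "is_rooted_tree n E r \<longleftrightarrow> is_tree n E \<and> r < n"

definition degree :: "(nat \<Rightarrow> nat \<Rightarrow> bool) \<Rightarrow> nat \<Rightarrow> nat" where
  "degree E v = card {j. E v j}"

text \<open>Leaf: non-root vertex of degree 1; in P_1 the single vertex is root and leaf.\<close>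
definition is_leaf :: "nat \<Rightarrow> (nat \<Rightarrow> nat \<Rightarrow> bool) \<Rightarrow> nat \<Rightarrow> nat \<Rightarrow> bool" where
  "is_leaf n E r v \<longleftrightarrow> v < n \<and> ((v \<noteq> r \<and> degree E v = 1) \<or> n = 1)"

text \<open>y is a child of the adjacent vertex z: the root-to-y path passes through z.\<close>
definition is_child :: "(nat \<Rightarrow> nat \<Rightarrow> bool) \<Rightarrow> nat \<Rightarrow> nat \<Rightarrow> nat \<Rightarrow> bool" where
  "is_child E r y z \<longleftrightarrow> E y z \<and> gdist E r y = gdist E r z + gdist E z y"

definition is_hedge :: "nat \<Rightarrow> (nat \<Rightarrow> nat \<Rightarrow> bool) \<Rightarrow> nat \<Rightarrow> bool" where
  "is_hedge n E r \<longleftrightarrow> is_rooted_tree n E r \<and>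
     (n = 1 \<or> (\<exists>d. \<forall>v. is_leaf n E r v \<longrightarrow> gdist E r v = d))"

definition vheight :: "nat \<Rightarrow> (nat \<Rightarrow> nat \<Rightarrow> bool) \<Rightarrow> nat \<Rightarrow> nat \<Rightarrow> nat" where
  "vheight n E r u = Min {gdist E u v | v. is_leaf n E r v}"

definition level_set :: "nat \<Rightarrow> (nat \<Rightarrow> nat \<Rightarrow> bool) \<Rightarrow> nat \<Rightarrow> nat \<Rightarrow> nat set" where
  "level_set n E r i = {v. v < n \<and> vheight n E r v = i}"

definition ell :: "nat \<Rightarrow> (nat \<Rightarrow> nat \<Rightarrow> bool) \<Rightarrow> nat \<Rightarrow> nat \<Rightarrow> int" where
  "ell n E r i = int (card (level_set n E r (i - 1))) - int (card (level_set n E r i))"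

definition in_R :: "nat \<Rightarrow> (nat \<Rightarrow> nat \<Rightarrow> bool) \<Rightarrow> real mat \<Rightarrow> bool" where
  "in_R n E A \<longleftrightarrow> A \<in> carrier_mat n n
     \<and> (\<forall>i<n. \<forall>j<n. i \<noteq> j \<longrightarrow> (A $$ (i, j) \<noteq> 0 \<longleftrightarrow> E i j))
     \<and> (\<forall>i<n. \<forall>j<n. E i j \<longrightarrow> A $$ (i, j) * A $$ (j, i) > 0)"

text \<open>Path-to-hedge class PH(C,T) for the hedge (n,E,r) of height H = vheight of r.
  C is indexed 0..H (0-based), so the paper's v' = H+1-h(v) becomes H - h(v).\<close>
definition PH :: "real mat \<Rightarrow> nat \<Rightarrow> (nat \<Rightarrow> nat \<Rightarrow> bool) \<Rightarrow> nat \<Rightarrow> real mat set" where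
  "PH C n E r = {A. in_R n E A \<and>
     (let H = vheight n E r r in
       (\<forall>v<n. A $$ (v, v) = C $$ (H - vheight n E r v, H - vheight n E r v))
     \<and> (\<forall>v<n. \<not> is_leaf n E r v \<longrightarrow>
          (\<Sum>u\<in>{u. u < n \<and> is_child E r u v}. A $$ (v, u) * A $$ (u, v))
            = C $$ (H - vheight n E r v, H - vheight n E r v + 1)
              * C $$ (H - vheight n E r v + 1, H - vheight n E r v)))}"

definition mult :: "real \<Rightarrow> real mat \<Rightarrow> nat" where
  "mult x A = order x (char_poly A)"

definition in_B :: "real \<Rightarrow> real \<Rightarrow> real \<Rightarrow> real \<Rightarrow> real \<Rightarrow> bool" where
  "in_B a1 a2 b2 b3 b4 \<longleftrightarrow> distinct [a1, a2, b2, b3, b4] \<and>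
    ( (b2 < a1 \<and> a1 < a2 \<and> a2 < b3 \<and> b3 < b4)
    \<or> (b2 < b4 \<and> b4 < a1 \<and> a1 < a2 \<and> a2 < b3)
    \<or> (b4 < b2 \<and> b2 < a1 \<and> a1 < a2 \<and> a2 < b3 \<and> a2 + b2 > b4 + b3)
    \<or> (b3 < b2 \<and> b2 < a1 \<and> a1 < a2 \<and> a2 < b4 \<and> a2 + b2 < b4 + b3)
    \<or> (b3 < b2 \<and> b2 < b4 \<and> b4 < a1 \<and> a1 < a2)
    \<or> (b4 < b3 \<and> b3 < b2 \<and> b2 < a1 \<and> a1 < a2)
    \<or> (b4 < b3 \<and> b3 < a2 \<and> a2 < a1 \<and> a1 < b2)
    \<or> (b3 < a2 \<and> a2 < a1 \<and> a1 < b4 \<and> b4 < b2)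
    \<or> (b3 < a2 \<and> a2 < a1 \<and> a1 < b2 \<and> b2 < b4 \<and> a2 + b2 < b4 + b3)
    \<or> (b4 < a2 \<and> a2 < a1 \<and> a1 < b2 \<and> b2 < b3 \<and> a2 + b2 > b4 + b3)
    \<or> (a2 < a1 \<and> a1 < b4 \<and> b4 < b2 \<and> b2 < b3)
    \<or> (a2 < a1 \<and> a1 < b2 \<and> b2 < b3 \<and> b3 < b4))"

definition coef_a :: "real \<Rightarrow> real \<Rightarrow> real \<Rightarrow> real \<Rightarrow> real \<Rightarrow> nat \<Rightarrow> real" where
  "coef_a a1 a2 b2 b3 b4 i =
     (if odd i then a1 else if i = 2 then - a1 + a2 + b2 else a2)"

definition coef_b :: "real \<Rightarrow> real \<Rightarrow> real \<Rightarrow> real \<Rightarrow> real \<Rightarrow> nat \<Rightarrow> real" where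
  "coef_b a1 a2 b2 b3 b4 i =
     (if i = 2 then (b2 - a1) * (a1 - a2)
      else if i = 3 then (b3 - a2) * (b3 - b2)
      else if i = 4 then (b4 - a1) * (b3 - b4) * (a2 + b2 - b3 - b4) / (b4 - b2)
      else (let bj = (if i mod 3 = 2 then b2 else if i mod 3 = 0 then b3 else b4)
            in (bj - a1) * (bj - a2)))"

text \<open>C^Lambda_n (0-based): diagonal (a_n,...,a_1), superdiagonal (b_n,...,b_2),
  subdiagonal all 1, zero elsewhere.\<close>
definition C_Lambda :: "real \<Rightarrow> real \<Rightarrow> real \<Rightarrow> real \<Rightarrow> real \<Rightarrow> nat \<Rightarrow> real mat" where
  "C_Lambda a1 a2 b2 b3 b4 n = mat n n (\<lambda>(k, l).
     if l = k then coef_a a1 a2 b2 b3 b4 (n - k)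
     else if l = k + 1 then coef_b a1 a2 b2 b3 b4 (n - k)
     else if k = l + 1 then 1
     else 0)"

end

theory Submission
  imports Defs
begin


lemma det_pot:
  fixes B :: "real mat" and f :: "nat \<Rightarrow> nat"
  assumes B: "B \<in> carrier_mat n n"
  and supp: "\<And>i j. i < n \<Longrightarrow> j < n \<Longrightarrow> i \<noteq> j \<Longrightarrow> B $$ (i,j) \<noteq> 0 \<Longrightarrow> f j < f i"
  shows "det B = (\<Prod>i=0..<n. B $$ (i,i))"
proof -
  have key: "p = id" if p: "p permutes {0..<n}" and nz: "(\<Prod>i=0..<n. B $$ (i, p i)) \<noteq> 0" for p
  proof -
    have nz': "B $$ (i, p i) \<noteq> 0" if "i < n" for i
      using nz that by (auto simp: prod_zero_iff)
    have pin: "p i < n" if "i<n" for i using permutes_in_image[OF p] that by auto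
    have le: "f (p i) \<le> f i" if "i<n" for i
      using supp[OF that pin[OF that] _ nz'[OF that]] by (cases "p i = i") auto
    have sumeq: "(\<Sum>i=0..<n. f (p i)) = (\<Sum>i=0..<n. f i)"
      using sum.permute[OF p, of f] by simp
    have fx: "p i = i" if "i < n" for i
    proof (rule ccontr)
      assume ne: "p i \<noteq> i"
      have "f (p i) < f i" using supp[OF that pin[OF that] _ nz'[OF that]] ne by auto
      hence "(\<Sum>i=0..<n. f (p i)) < (\<Sum>i=0..<n. f i)"
        using le that by (intro sum_strict_mono_ex1) auto
      with sumeq show False by simp
    qed
    show "p = id"
    proof
      fix i show "p i = id i" using fx permutes_not_in[OF p] by (cases "i < n") auto
    qed
  qed
  let ?P = "{p. p permutes {0..<n}}"
  let ?g = "\<lambda>p. signof p * (\<Prod>i=0..<n. B $$ (i, p i))"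
  have fin: "finite ?P" by (simp add: finite_permutations)
  have idP: "id \<in> ?P" by (simp add: permutes_id)
  have "det B = sum ?g ?P" using B unfolding det_def by auto
  also have "\<dots> = ?g id + sum ?g (?P - {id})" by (rule sum.remove[OF fin idP])
  also have "sum ?g (?P - {id}) = 0"
    by (rule sum.neutral) (use key in auto)
  finally show ?thesis by (simp add: sign_id)
qed



lemma walk_snoc: "is_walk E xs \<Longrightarrow> E (last xs) v \<Longrightarrow> is_walk E (xs @ [v])"
  unfolding is_walk_def
  apply (auto simp: nth_append last_conv_nth less_Suc_eq)
  subgoal for i by (subgoal_tac "i = length xs - Suc 0") auto
  done

lemma walk_take: "is_walk E xs \<Longrightarrow> 0 < k \<Longrightarrow> is_walk E (take k xs)"
  unfolding is_walk_def by auto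

lemma walk_append: assumes xs: "is_walk E xs" and ys: "is_walk E ys" and eq: "last xs = hd ys"
  shows "is_walk E (xs @ tl ys)"
  unfolding is_walk_def
proof (intro conjI allI impI)
  show "xs @ tl ys \<noteq> []" using xs by (simp add: is_walk_def)
  fix i assume i: "Suc i < length (xs @ tl ys)"
  have xne: "xs \<noteq> []" and yne: "ys \<noteq> []" using xs ys by (auto simp: is_walk_def)
  consider "Suc i < length xs" | "Suc i = length xs" | "length xs \<le> i" by linarith
  then show "E ((xs @ tl ys) ! i) ((xs @ tl ys) ! Suc i)"
  proof cases
    case 1 then show ?thesis using xs by (simp add: nth_append is_walk_def)
  next
    case 2
    have "i = length xs - 1" using 2 by simp
    then have "xs ! i = last xs" using xne by (simp add: last_conv_nth)
    moreover have "(xs @ tl ys) ! Suc i = ys ! 1" using 2 i by (simp add: nth_append nth_tl)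
    moreover have "hd ys = ys ! 0" using yne by (simp add: hd_conv_nth)
    moreover have "Suc 0 < length ys" using i 2 by simp
    ultimately show ?thesis using ys eq 2 unfolding is_walk_def by (simp add: nth_append)
  next
    case 3
    have a: "(xs @ tl ys) ! i = ys ! Suc (i - length xs)" using 3 i by (simp add: nth_append nth_tl)
    have b: "(xs @ tl ys) ! Suc i = ys ! Suc (Suc (i - length xs))" using 3 i
      by (simp add: nth_append nth_tl Suc_diff_le)
    have "Suc (Suc (i - length xs)) < length ys" using 3 i by auto
    then show ?thesis using ys a b unfolding is_walk_def by simp
  qed
qed



lemma gdist_ex: "connected_by E u v \<Longrightarrow> \<exists>xs. is_walk E xs \<and> hd xs = u \<and> last xs = v \<and> length xs = Suc (gdist E u v)"
proof -
  assume "connected_by E u v"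
  then obtain xs where xs: "is_walk E xs" "hd xs = u" "last xs = v" unfolding connected_by_def by blast
  then have "length xs = Suc (length xs - 1)" by (cases xs) (auto simp: is_walk_def)
  with xs have "\<exists>k. \<exists>xs. is_walk E xs \<and> hd xs = u \<and> last xs = v \<and> length xs = Suc k" by blast
  then show ?thesis unfolding gdist_def by (rule LeastI_ex)
qed

lemma gdist_le: "is_walk E xs \<Longrightarrow> hd xs = u \<Longrightarrow> last xs = v \<Longrightarrow> gdist E u v \<le> length xs - 1"
proof -
  assume xs: "is_walk E xs" "hd xs = u" "last xs = v"
  then have "length xs = Suc (length xs - 1)" by (cases xs) (auto simp: is_walk_def)
  with xs show ?thesis unfolding gdist_def by (intro Least_le) blast
qed

lemma gdist_refl: "gdist E u u = 0"
  using gdist_le[of E "[u]" u u] by (simp add: is_walk_def)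

lemma gdist_edge: "E u v \<Longrightarrow> gdist E u v \<le> 1"
  using gdist_le[of E "[u,v]" u v] by (simp add: is_walk_def)

lemma gdist_tri: "connected_by E u v \<Longrightarrow> connected_by E v w \<Longrightarrow> gdist E u w \<le> gdist E u v + gdist E v w"
proof -
  assume a: "connected_by E u v" "connected_by E v w"
  obtain xs where xs: "is_walk E xs" "hd xs = u" "last xs = v" "length xs = Suc (gdist E u v)"
    using gdist_ex[OF a(1)] by blast
  obtain ys where ys: "is_walk E ys" "hd ys = v" "last ys = w" "length ys = Suc (gdist E v w)"
    using gdist_ex[OF a(2)] by blast
  have w: "is_walk E (xs @ tl ys)" using walk_append xs ys by simp
  have h: "hd (xs @ tl ys) = u" using xs by (cases xs) auto
  have l: "last (xs @ tl ys) = w"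
  proof (cases "tl ys")
    case Nil then have "ys = [v]" using ys by (cases ys) auto
    then show ?thesis using xs ys Nil by simp
  next
    case (Cons z zs) then show ?thesis using ys by (cases ys) (auto simp: last_append)
  qed
  show ?thesis using gdist_le[OF w h l] xs ys by simp
qed

lemma gdist_pos: "connected_by E u v \<Longrightarrow> u \<noteq> v \<Longrightarrow> 1 \<le> gdist E u v"
proof (rule ccontr)
  assume a: "connected_by E u v" "u \<noteq> v" "\<not> 1 \<le> gdist E u v"
  obtain xs where xs: "is_walk E xs" "hd xs = u" "last xs = v" "length xs = Suc (gdist E u v)"
    using gdist_ex[OF a(1)] by blast
  then have "length xs = 1" using a by simp
  then obtain z where "xs = [z]" by (cases xs) auto
  then show False using xs a by simp
qed

locale hedge =
  fixes n :: nat and E :: "nat \<Rightarrow> nat \<Rightarrow> bool" and r :: nat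
  assumes tree: "is_tree n E" and rn: "r < n"
    and hl: "n = 1 \<or> (\<exists>d. \<forall>v. is_leaf n E r v \<longrightarrow> gdist E r v = d)"
begin

lemma Eb: "E i j \<Longrightarrow> i < n \<and> j < n \<and> i \<noteq> j \<and> E j i"
  using tree unfolding is_tree_def by blast

lemma conn: "i < n \<Longrightarrow> j < n \<Longrightarrow> connected_by E i j"
  using tree unfolding is_tree_def by blast

lemma ecard: "card (edges n E) = n - 1"
  using tree unfolding is_tree_def by blast

abbreviation dep where "dep v \<equiv> gdist E r v"

lemma dep_r: "dep r = 0" by (rule gdist_refl)

lemma dep_edge: "E u v \<Longrightarrow> dep v \<le> dep u + 1"
proof -
  assume e: "E u v"
  have "dep v \<le> dep u + gdist E u v" using gdist_tri conn Eb[OF e] rn by blast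
  then show ?thesis using gdist_edge[of E, OF e] by simp
qed

lemma gdist_adj: "E u v \<Longrightarrow> gdist E u v = 1"
proof -
  assume e: "E u v"
  have "gdist E u v \<le> 1" using gdist_edge[of E, OF e] .
  moreover have "1 \<le> gdist E u v" using gdist_pos[OF conn] Eb[OF e] by blast
  ultimately show ?thesis by simp
qed

lemma parent_ex: "v < n \<Longrightarrow> v \<noteq> r \<Longrightarrow> \<exists>p. E p v \<and> dep p + 1 = dep v"
proof -
  assume v: "v < n" "v \<noteq> r"
  obtain xs where xs: "is_walk E xs" "hd xs = r" "last xs = v" "length xs = Suc (dep v)"
    using gdist_ex[OF conn[OF rn v(1)]] by blast
  define k where "k = dep v"
  have k1: "1 \<le> k" using gdist_pos[OF conn[OF rn v(1)]] v unfolding k_def by auto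
  have sk: "Suc (k-1) < length xs" using xs k1 unfolding k_def by simp
  have "E (xs ! (k - 1)) (xs ! Suc (k-1))" using xs(1) sk unfolding is_walk_def by blast
  then have e: "E (xs ! (k - 1)) (xs ! k)" using k1 by simp
  have xne: "xs \<noteq> []" using xs(4) by auto
  have xk: "xs ! k = v" using xs(3,4) last_conv_nth[OF xne] unfolding k_def by simp
  let ?p = "xs ! (k - 1)"
  have tw: "is_walk E (take k xs)" using walk_take[OF xs(1)] k1 by simp
  have th: "hd (take k xs) = r" using xs k1 by (cases xs) auto
  have tne: "take k xs \<noteq> []" using xne k1 by simp
  have tl: "last (take k xs) = ?p" using last_conv_nth[OF tne] xs(4) k1 unfolding k_def
    by simp
  have "dep ?p \<le> k - 1" using gdist_le[OF tw th tl] xs unfolding k_def by simp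
  moreover have "dep v \<le> dep ?p + 1" using dep_edge e xk by simp
  ultimately have "dep ?p + 1 = dep v" using k1 unfolding k_def by linarith
  then show ?thesis using e xk by blast
qed

definition par where "par v = (SOME p. E p v \<and> dep p + 1 = dep v)"

lemma par: "v < n \<Longrightarrow> v \<noteq> r \<Longrightarrow> E (par v) v \<and> dep (par v) + 1 = dep v"
  unfolding par_def using parent_ex by (rule someI_ex) 

end


context hedge begin

lemma par_lt: "v < n \<Longrightarrow> v \<noteq> r \<Longrightarrow> par v < n"
  using par Eb by blast

lemma edges_fin: "finite (edges n E)"
proof -
  have "edges n E \<subseteq> Pow {..<n}" unfolding edges_def by auto
  then show ?thesis by (rule finite_subset) simp
qed

lemma edge_cases: assumes e: "E i j"
  shows "(i \<noteq> r \<and> j = par i) \<or> (j \<noteq> r \<and> i = par j)"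
proof -
  define S where "S = {v. v < n \<and> v \<noteq> r}"
  define f where "f v = {v, par v}" for v
  have cS: "card S = n - 1"
  proof -
    have "S = {..<n} - {r}" unfolding S_def by auto
    then show ?thesis using rn by simp
  qed
  have inj: "inj_on f S"
  proof
    fix v w assume v: "v \<in> S" and w: "w \<in> S" and eq: "f v = f w"
    have pv: "dep (par v) + 1 = dep v" and pw: "dep (par w) + 1 = dep w" using par v w unfolding S_def by auto
    from eq have "(v = w \<and> par v = par w) \<or> (v = par w \<and> par v = w)" unfolding f_def by (simp add: doubleton_eq_iff)
    then show "v = w" using pv pw by auto
  qed
  have sub: "f ` S \<subseteq> edges n E"
  proof
    fix x assume "x \<in> f ` S"
    then obtain v where v: "v \<in> S" "x = {v, par v}" unfolding f_def by auto
    have "E v (par v)" using par[of v] Eb v unfolding S_def by blast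
    then show "x \<in> edges n E" unfolding edges_def using v par_lt unfolding S_def by blast
  qed
  have "card (f ` S) = card (edges n E)" using card_image[OF inj] cS ecard by simp
  then have eqs: "f ` S = edges n E" using card_subset_eq[OF edges_fin sub] by simp
  have "{i, j} \<in> edges n E" unfolding edges_def using e Eb[OF e] by blast
  then obtain v where v: "v \<in> S" "{i,j} = {v, par v}" using eqs unfolding f_def by auto
  then have "(i = v \<and> j = par v) \<or> (i = par v \<and> j = v)" by (simp add: doubleton_eq_iff)
  then show ?thesis using v unfolding S_def by auto
qed

lemma edge_dep: assumes e: "E i j" shows "dep j = dep i + 1 \<or> dep i = dep j + 1"
proof -
  have "i < n" "j < n" using Eb[OF e] by auto
  then show ?thesis using edge_cases[OF e] par[of i] par[of j] by auto
qed

lemma child_iff: "is_child E r u v \<longleftrightarrow> E u v \<and> dep u = dep v + 1"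
proof
  assume "is_child E r u v"
  then show "E u v \<and> dep u = dep v + 1" unfolding is_child_def using gdist_adj Eb by auto
next
  assume a: "E u v \<and> dep u = dep v + 1"
  then have "gdist E v u = 1" using gdist_adj Eb by blast
  then show "is_child E r u v" unfolding is_child_def using a by simp
qed

lemma child_par: "E u v \<Longrightarrow> dep u = dep v + 1 \<Longrightarrow> u \<noteq> r \<and> v = par u"
proof -
  assume e: "E u v" and d: "dep u = dep v + 1"
  have "u < n" "v < n" using Eb[OF e] by auto
  then show ?thesis using edge_cases[OF e] par[of v] d by auto
qed

lemma par_child: "u < n \<Longrightarrow> u \<noteq> r \<Longrightarrow> E u (par u) \<and> dep u = dep (par u) + 1"
  using par Eb by auto

lemma nochild_leaf: assumes v: "v < n" and nc: "\<not> (\<exists>c. E c v \<and> dep c = dep v + 1)"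
  shows "is_leaf n E r v"
proof (cases "n = 1")
  case True then show ?thesis using v unfolding is_leaf_def by simp
next
  case False
  show ?thesis
  proof (cases "v = r")
    case True
    define j :: nat where "j = (if r = 0 then 1 else 0)"
    have j: "j < n" "j \<noteq> r" using False rn unfolding j_def by auto
    obtain xs where xs: "is_walk E xs" "hd xs = r" "last xs = j" "length xs = Suc (dep j)"
      using gdist_ex[OF conn[OF rn j(1)]] by blast
    have "1 \<le> dep j" using gdist_pos[OF conn[OF rn j(1)]] j by auto
    then have l: "Suc 0 < length xs" using xs by simp
    have e: "E (xs ! 0) (xs ! 1)" using xs(1) l unfolding is_walk_def by auto
    have x0: "xs ! 0 = r" using xs(2) l by (cases xs) auto
    have "E (xs ! 1) r" using e x0 Eb by blast
    moreover have "dep (xs ! 1) = dep r + 1" using edge_dep[OF e] x0 dep_r by auto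
    ultimately show ?thesis using nc True by blast
  next
    case nr: False
    have "{j. E v j} = {par v}"
    proof
      show "{j. E v j} \<subseteq> {par v}"
      proof
        fix j assume "j \<in> {j. E v j}"
        then have e: "E v j" by simp
        from edge_cases[OF e] show "j \<in> {par v}"
        proof
          assume "j \<noteq> r \<and> v = par j"
          then have "E j v \<and> dep j = dep v + 1" using par[of j] Eb[OF e] by auto
          then show ?thesis using nc by blast
        qed simp
      qed
      show "{par v} \<subseteq> {j. E v j}" using par[OF v nr] Eb by blast
    qed
    then show ?thesis unfolding is_leaf_def degree_def using v nr by simp
  qed
qed

lemma desc: "v < n \<Longrightarrow> \<exists>l. is_leaf n E r l \<and> dep v + gdist E v l \<le> dep l"
proof -
  define M where "M = Max (dep ` {..<n})"
  have dM: "dep w \<le> M" if "w < n" for w unfolding M_def using that by (intro Max_ge) auto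
  show "v < n \<Longrightarrow> ?thesis"
  proof (induction "M - dep v" arbitrary: v rule: less_induct)
    case less
    show ?case
    proof (cases "\<exists>c. E c v \<and> dep c = dep v + 1")
      case True
      then obtain c where c: "E c v" "dep c = dep v + 1" by blast
      have cn: "c < n" using Eb[OF c(1)] by simp
      have "M - dep c < M - dep v" using dM[OF cn] c(2) by simp
      then obtain l where l: "is_leaf n E r l" "dep c + gdist E c l \<le> dep l" using less.hyps cn by blast
      have ln: "l < n" using l(1) unfolding is_leaf_def by simp
      have "gdist E v l \<le> gdist E v c + gdist E c l" using gdist_tri conn less.prems cn ln by blast
      moreover have "gdist E v c = 1" using gdist_adj Eb c(1) by blast
      ultimately show ?thesis using l c(2) by auto
    next
      case False
      then have "is_leaf n E r v" using nochild_leaf less.prems by blast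
      then show ?thesis using gdist_refl[of E v] by auto
    qed
  qed
qed

lemma leaf_dep: "\<exists>D. \<forall>l. is_leaf n E r l \<longrightarrow> dep l = D"
  using hl
proof
  assume n1: "n = 1"
  have "is_leaf n E r l \<Longrightarrow> dep l = 0" for l using n1 rn dep_r unfolding is_leaf_def by auto
  then show ?thesis by blast
qed

definition D where "D = (SOME D. \<forall>l. is_leaf n E r l \<longrightarrow> dep l = D)"

lemma D: "is_leaf n E r l \<Longrightarrow> dep l = D"
  using someI_ex[OF leaf_dep] unfolding D_def by blast

lemma dep_le: "v < n \<Longrightarrow> dep v \<le> D"
  using desc D by fastforce

lemma vheight_eq: assumes v: "v < n" shows "vheight n E r v = D - dep v"
proof -
  let ?S = "{gdist E v l | l. is_leaf n E r l}"
  obtain l where l: "is_leaf n E r l" "dep v + gdist E v l \<le> dep l" using desc v by blast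
  have low: "D - dep v \<le> gdist E v l'" if "is_leaf n E r l'" for l'
  proof -
    have "l' < n" using that unfolding is_leaf_def by simp
    then have "dep l' \<le> dep v + gdist E v l'" using gdist_tri conn rn v by blast
    then show ?thesis using D[OF that] by simp
  qed
  have eq: "gdist E v l = D - dep v" using low[OF l(1)] l D[OF l(1)] by simp
  have fin: "finite ?S"
  proof -
    have "?S \<subseteq> gdist E v ` {..<n}" unfolding is_leaf_def by auto
    then show ?thesis by (rule finite_subset) simp
  qed
  have "Min ?S = D - dep v"
    by (rule Min_eqI[OF fin]) (use low eq l(1) in \<open>auto intro!: exI[of _ l]\<close>)
  then show ?thesis unfolding vheight_def by simp
qed

abbreviation ht where "ht v \<equiv> vheight n E r v"

lemma H_eq: "ht r = D" using vheight_eq[OF rn] dep_r by simp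

lemma ht_le: "v < n \<Longrightarrow> ht v \<le> ht r" using vheight_eq rn H_eq by simp

lemma ht_leaf: "is_leaf n E r v \<Longrightarrow> ht v = 0"
  using vheight_eq D unfolding is_leaf_def by auto

lemma ht_nonleaf: "v < n \<Longrightarrow> \<not> is_leaf n E r v \<Longrightarrow> 1 \<le> ht v"
proof -
  assume v: "v < n" "\<not> is_leaf n E r v"
  then obtain c where c: "E c v" "dep c = dep v + 1" using nochild_leaf by blast
  have "dep c \<le> D" using dep_le Eb[OF c(1)] by blast
  then show ?thesis using vheight_eq[OF v(1)] c by simp
qed

lemma ht_par: "v < n \<Longrightarrow> v \<noteq> r \<Longrightarrow> ht (par v) = ht v + 1"
proof -
  assume v: "v < n" "v \<noteq> r"
  have "dep v \<le> D" using dep_le v by simp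
  moreover have "dep (par v) + 1 = dep v" using par[OF v] by simp
  ultimately show ?thesis using vheight_eq[OF v(1)] vheight_eq[OF par_lt[OF v]] by simp
qed

lemma leaf_nochild: "is_leaf n E r v \<Longrightarrow> E c v \<Longrightarrow> dep c = dep v + 1 \<Longrightarrow> False"
  using D dep_le Eb by fastforce

lemma children: "v < n \<Longrightarrow> {u. u < n \<and> is_child E r u v} = {u. u < n \<and> u \<noteq> r \<and> par u = v}"
  using child_iff child_par par_child by auto

end


fun phi :: "(nat \<Rightarrow> real) \<Rightarrow> (nat \<Rightarrow> real) \<Rightarrow> nat \<Rightarrow> real poly" where
  "phi a b 0 = 1"
| "phi a b (Suc 0) = [:- a 1, 1:]"
| "phi a b (Suc (Suc k)) = [:- a (k+2), 1:] * phi a b (Suc k) - Polynomial.smult (b (k+2)) (phi a b k)"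

lemma poly_phi0: "poly (phi a b 0) x = 1" by simp
lemma poly_phi1: "poly (phi a b (Suc 0)) x = x - a 1" by simp
lemma poly_phiSS: "poly (phi a b (Suc (Suc k))) x = (x - a (k+2)) * poly (phi a b (Suc k)) x - b (k+2) * poly (phi a b k) x"
  by (simp add: algebra_simps)

definition Wr where "Wr a b k x = poly (pderiv (phi a b (Suc k))) x * poly (phi a b k) x
   - poly (phi a b (Suc k)) x * poly (pderiv (phi a b k)) x"

lemma Wr_pos: assumes bp: "\<And>i. 2 \<le> i \<Longrightarrow> b i > 0" shows "Wr a b k x > 0"
proof (induction k)
  case 0 then show ?case by (simp add: Wr_def pderiv_pCons)
next
  case (Suc k)
  have d: "pderiv (phi a b (Suc (Suc k))) = phi a b (Suc k) + [:- a (k+2), 1:] * pderiv (phi a b (Suc k))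
      - Polynomial.smult (b (k+2)) (pderiv (phi a b k))"
    by (simp add: pderiv_diff pderiv_mult pderiv_smult pderiv_pCons pderiv_add algebra_simps)
  have "Wr a b (Suc k) x = (poly (phi a b (Suc k)) x)^2 + b (k+2) * Wr a b k x"
    unfolding Wr_def d by (simp add: algebra_simps power2_eq_square)
  moreover have "b (k+2) > 0" using bp by simp
  ultimately show ?case using Suc.IH
    by (metis add_pos_nonneg mult_pos_pos zero_le_power2 add.commute add_nonneg_pos)
qed

lemma phi_nz: assumes bp: "\<And>i. 2 \<le> i \<Longrightarrow> b i > 0" shows "phi a b k \<noteq> 0"
proof (cases k)
  case 0 then show ?thesis by simp
next
  case (Suc j)
  show ?thesis
  proof
    assume "phi a b k = 0"
    then have "Wr a b j 0 = 0" unfolding Wr_def Suc by simp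
    moreover have "Wr a b j 0 > 0" by (rule Wr_pos) (rule bp)
    ultimately show False by simp
  qed
qed

lemma phi_order: assumes bp: "\<And>i. 2 \<le> i \<Longrightarrow> b i > 0"
  shows "order x (phi a b k) = (if poly (phi a b k) x = 0 then 1 else 0)"
proof (cases "poly (phi a b k) x = 0")
  case False then show ?thesis by (simp add: order_0I)
next
  case True
  then obtain j where k: "k = Suc j" by (cases k) auto
  have "Wr a b j x > 0" by (rule Wr_pos) (rule bp)
  then have "poly (pderiv (phi a b k)) x \<noteq> 0" using True unfolding Wr_def k by auto
  then have o: "order x (pderiv (phi a b k)) = 0" by (rule order_0I)
  have "order x (phi a b k) = Suc (order x (pderiv (phi a b k)))"
    by (rule order_pderiv[OF _ True]) (rule phi_nz, rule bp)
  then show ?thesis using o True by simp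
qed



context hedge begin

lemma par_ne: "v < n \<Longrightarrow> v \<noteq> r \<Longrightarrow> par v \<noteq> v"
  using par by fastforce

lemma det_factor:
  fixes A :: "real mat" and a b :: "nat \<Rightarrow> real" and x :: real
  assumes A: "A \<in> carrier_mat n n"
    and offd: "\<And>i j. i < n \<Longrightarrow> j < n \<Longrightarrow> i \<noteq> j \<Longrightarrow> A $$ (i,j) \<noteq> 0 \<Longrightarrow> E i j"
    and diag: "\<And>v. v < n \<Longrightarrow> A $$ (v,v) = a (ht v + 1)"
    and sums: "\<And>v. v < n \<Longrightarrow> \<not> is_leaf n E r v \<Longrightarrow>
        (\<Sum>u\<in>{u. u < n \<and> u \<noteq> r \<and> par u = v}. A $$ (v,u) * A $$ (u,v)) = b (ht v + 1)"
    and good: "\<And>k. k \<le> ht r \<Longrightarrow> poly (phi a b k) x \<noteq> 0"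
  shows "det (mat n n (\<lambda>(i,j). (if i = j then x else 0) - A $$ (i,j)))
     = (\<Prod>v=0..<n. poly (phi a b (ht v + 1)) x / poly (phi a b (ht v)) x)"
proof -
  define dd where "dd k = poly (phi a b (k + 1)) x / poly (phi a b k) x" for k
  have dd0: "dd 0 = x - a 1" unfolding dd_def by simp
  have ddS: "dd k = x - a (k+1) - b (k+1) / dd (k - 1)" if kk: "1 \<le> k" "k \<le> ht r" for k
  proof -
    obtain j where k: "k = Suc j" using kk by (cases k) auto
    have n1: "poly (phi a b (Suc j)) x \<noteq> 0" using good kk k by simp
    have n0: "poly (phi a b j) x \<noteq> 0" using good kk k by simp
    have "dd k = ((x - a (k+1)) * poly (phi a b k) x - b (k+1) * poly (phi a b j) x) / poly (phi a b k) x"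
      unfolding dd_def k using poly_phiSS[of a b j x] by (simp add: add.commute)
    also have "\<dots> = x - a (k+1) - b (k+1) / dd (k - 1)"
      unfolding dd_def k using n1 n0 by (simp add: field_simps)
    finally show ?thesis .
  qed
  have ddnz: "dd k \<noteq> 0" if "k < ht r" for k
    unfolding dd_def using good that by simp
  define C where "C i = {k. k < n \<and> k \<noteq> r \<and> par k = i}" for i
  define R where "R = mat n n (\<lambda>(i,j). if j = i then dd (ht i) else if i \<noteq> r \<and> j = par i then - A $$ (i,j) else 0)"
  define K where "K = mat n n (\<lambda>(i,j). if j = i then 1 else if j \<noteq> r \<and> par j = i then - A $$ (i,j) / dd (ht j) else 0)"
  define M where "M = mat n n (\<lambda>(i,j). (if i = j then x else 0) - A $$ (i,j))"
  have R: "R \<in> carrier_mat n n" and K: "K \<in> carrier_mat n n" unfolding R_def K_def by auto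
  have detK: "det K = 1"
  proof -
    have "det K = (\<Prod>i=0..<n. K $$ (i,i))"
    proof (rule det_pot[OF K, where f = ht])
      fix i j assume ij: "i < n" "j < n" "i \<noteq> j" "K $$ (i,j) \<noteq> 0"
      then have "j \<noteq> r" "par j = i" unfolding K_def by (auto split: if_splits)
      then show "ht j < ht i" using ht_par ij by auto
    qed
    also have "\<dots> = 1" unfolding K_def by simp
    finally show ?thesis .
  qed
  have detR: "det R = (\<Prod>i=0..<n. dd (ht i))"
  proof -
    have "det R = (\<Prod>i=0..<n. R $$ (i,i))"
    proof (rule det_pot[OF R, where f = "\<lambda>j. ht r - ht j"])
      fix i j assume ij: "i < n" "j < n" "i \<noteq> j" "R $$ (i,j) \<noteq> 0"
      then have "i \<noteq> r" "j = par i" unfolding R_def by (auto split: if_splits)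
      then show "ht r - ht j < ht r - ht i" using ht_par ht_le ij by fastforce
    qed
    also have "\<dots> = (\<Prod>i=0..<n. dd (ht i))" unfolding R_def by simp
    finally show ?thesis .
  qed
  have KR: "K * R = M"
  proof (rule eq_matI)
    show "dim_row (K * R) = dim_row M" "dim_col (K * R) = dim_col M" unfolding K_def R_def M_def by auto
    fix i j assume i: "i < dim_row M" and j: "j < dim_col M"
    then have i: "i < n" and j: "j < n" unfolding M_def by auto
    define c where "c k = - A $$ (i,k) / dd (ht k)" for k
    have iC: "i \<notin> C i" unfolding C_def using par_ne by auto
    have "(K * R) $$ (i,j) = (\<Sum>k=0..<n. K $$ (i,k) * R $$ (k,j))"
      using i j K R by (simp add: scalar_prod_def)
    also have "\<dots> = (\<Sum>k=0..<n. (if k = i then R $$ (k,j) else 0) + (if k \<in> C i then c k * R $$ (k,j) else 0))"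
      by (rule sum.cong) (use iC i in \<open>auto simp: K_def C_def c_def\<close>)
    also have "\<dots> = R $$ (i,j) + (\<Sum>k\<in>C i. c k * R $$ (k,j))"
    proof -
      have "(\<Sum>k=0..<n. (if k \<in> C i then c k * R $$ (k,j) else 0)) = (\<Sum>k\<in>{k\<in>{0..<n}. k \<in> C i}. c k * R $$ (k,j))"
        by (rule sum.inter_filter[symmetric]) simp
      also have "{k\<in>{0..<n}. k \<in> C i} = C i" unfolding C_def by auto
      finally show ?thesis using i by (simp add: sum.distrib)
    qed
    also have "\<dots> = M $$ (i,j)"
    proof -
      have Rk: "R $$ (k,j) = (if j = k then dd (ht k) else if j = i then - A $$ (k,i) else 0)" if "k \<in> C i" for k
        using that j unfolding C_def R_def by auto
      consider (cj) "j \<in> C i" | (ii) "j = i" | (oth) "j \<notin> C i" "j \<noteq> i" by blast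
      then show ?thesis
      proof cases
        case cj
        have "(\<Sum>k\<in>C i. c k * R $$ (k,j)) = (\<Sum>k\<in>C i. if k = j then c k * dd (ht k) else 0)"
          by (rule sum.cong) (use Rk cj iC in auto)
        also have "\<dots> = c j * dd (ht j)" using cj unfolding C_def by simp
        also have "\<dots> = - A $$ (i,j)"
        proof -
          have "ht j < ht r" using cj ht_par[of j] ht_le[OF i] unfolding C_def by auto
          then show ?thesis unfolding c_def using ddnz by simp
        qed
        finally have s: "(\<Sum>k\<in>C i. c k * R $$ (k,j)) = - A $$ (i,j)" .
        have "R $$ (i,j) = 0"
        proof -
          have "j \<noteq> i" using cj iC by auto
          moreover have "\<not> (i \<noteq> r \<and> j = par i)"
            using cj unfolding C_def using par[of i] par[of j] i by fastforce
          ultimately show ?thesis unfolding R_def using i j by auto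
        qed
        then show ?thesis using s cj iC i j unfolding M_def by auto
      next
        case ii
        have "(\<Sum>k\<in>C i. c k * R $$ (k,j)) = (\<Sum>k\<in>C i. A $$ (i,k) * A $$ (k,i) / dd (ht k))"
          by (rule sum.cong) (use Rk ii iC in \<open>auto simp: c_def\<close>)
        show ?thesis
        proof (cases "is_leaf n E r i")
          case True
          have "C i = {}" using leaf_nochild[OF True] par_child unfolding C_def by fastforce
          then show ?thesis using ii True ht_leaf[OF True] dd0 diag[OF i] i unfolding R_def M_def by simp
        next
          case False
          have h1: "1 \<le> ht i" using ht_nonleaf[OF i False] .
          have hk: "ht k = ht i - 1" if "k \<in> C i" for k using that ht_par unfolding C_def by fastforce
          have "(\<Sum>k\<in>C i. c k * R $$ (k,j)) = (\<Sum>k\<in>C i. A $$ (i,k) * A $$ (k,i)) / dd (ht i - 1)"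
            unfolding \<open>(\<Sum>k\<in>C i. c k * R $$ (k,j)) = _\<close> sum_divide_distrib using hk by (intro sum.cong) auto
          also have "\<dots> = b (ht i + 1) / dd (ht i - 1)" using sums[OF i False] unfolding C_def by simp
          finally have s: "(\<Sum>k\<in>C i. c k * R $$ (k,j)) = b (ht i + 1) / dd (ht i - 1)" .
          have "R $$ (i,j) = x - a (ht i + 1) - b (ht i + 1) / dd (ht i - 1)"
            unfolding R_def using ii i ddS[OF h1 ht_le[OF i]] by simp
          then show ?thesis using s ii i diag[OF i] unfolding M_def by simp
        qed
      next
        case oth
        have "(\<Sum>k\<in>C i. c k * R $$ (k,j)) = 0"
          by (rule sum.neutral) (use Rk oth in fastforce)
        moreover have "R $$ (i,j) = M $$ (i,j)"
        proof (cases "i \<noteq> r \<and> j = par i")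
          case True then show ?thesis using oth i j unfolding R_def M_def by auto
        next
          case False
          have "\<not> E i j"
          proof
            assume "E i j"
            from edge_cases[OF this] show False using False oth j unfolding C_def by auto
          qed
          then have "A $$ (i,j) = 0" using offd i j oth by blast
          then show ?thesis using False oth i j unfolding R_def M_def by auto
        qed
        ultimately show ?thesis by simp
      qed
    qed
    finally show "(K * R) $$ (i,j) = M $$ (i,j)" .
  qed
  have "det M = det K * det R" using det_mult[OF K R] KR by simp
  then show ?thesis unfolding M_def using detK detR by (simp add: dd_def)
qed

end


lemma poly_eq_cofinite: fixes p q :: "real poly"
  assumes fin: "finite Z" and eq: "\<And>x. x \<notin> Z \<Longrightarrow> poly p x = poly q x" shows "p = q"
proof (rule ccontr)
  assume "p \<noteq> q"
  then have "p - q \<noteq> 0" by simp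
  then have f: "finite {x. poly (p - q) x = 0}" by (rule poly_roots_finite)
  have "UNIV - Z \<subseteq> {x. poly (p - q) x = 0}" using eq by auto
  then have "finite (UNIV - Z)" using f finite_subset by blast
  then have "finite (UNIV :: real set)" using fin by (metis Diff_partition finite_Un subset_UNIV)
  then show False using infinite_UNIV_char_0 by blast
qed

lemma order_prod: fixes f :: "nat \<Rightarrow> real poly"
  assumes "\<And>i. i \<in> S \<Longrightarrow> f i \<noteq> 0" and "finite S"
  shows "order x (\<Prod>i\<in>S. f i) = (\<Sum>i\<in>S. order x (f i))"
  using assms(2,1)
proof (induction S rule: finite_induct)
  case empty then show ?case by simp
next
  case (insert a S)
  have "(\<Prod>i\<in>S. f i) \<noteq> 0" using insert by (simp add: prod_zero_iff)
  moreover have "f a \<noteq> 0" using insert by simp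
  ultimately show ?case using insert by (simp add: order_mult)
qed

context hedge begin

lemma char_poly_id:
  fixes A :: "real mat" and a b :: "nat \<Rightarrow> real"
  assumes A: "A \<in> carrier_mat n n"
    and offd: "\<And>i j. i < n \<Longrightarrow> j < n \<Longrightarrow> i \<noteq> j \<Longrightarrow> A $$ (i,j) \<noteq> 0 \<Longrightarrow> E i j"
    and diag: "\<And>v. v < n \<Longrightarrow> A $$ (v,v) = a (ht v + 1)"
    and sums: "\<And>v. v < n \<Longrightarrow> \<not> is_leaf n E r v \<Longrightarrow>
        (\<Sum>u\<in>{u. u < n \<and> u \<noteq> r \<and> par u = v}. A $$ (v,u) * A $$ (u,v)) = b (ht v + 1)"
    and bp: "\<And>i. 2 \<le> i \<Longrightarrow> b i > 0"
  shows "char_poly A * (\<Prod>v=0..<n. phi a b (ht v)) = (\<Prod>v=0..<n. phi a b (ht v + 1))"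
proof (rule poly_eq_cofinite)
  have pnz: "\<And>k. phi a b k \<noteq> 0" by (rule phi_nz) (rule bp)
  let ?Z = "\<Union>k\<in>{..ht r}. {x. poly (phi a b k) x = 0}"
  show "finite ?Z" using poly_roots_finite pnz by auto
  fix x assume x: "x \<notin> ?Z"
  have good: "poly (phi a b k) x \<noteq> 0" if "k \<le> ht r" for k using x that by auto
  have cm: "- (char_matrix A x) = mat n n (\<lambda>(i,j). (if i = j then x else 0) - A $$ (i,j))"
    by (rule eq_matI) (use A in \<open>auto simp: char_matrix_def\<close>)
  have pc: "poly (char_poly A) x = (\<Prod>v=0..<n. poly (phi a b (ht v + 1)) x / poly (phi a b (ht v)) x)"
    using char_poly_matrix[OF A, of x] cm det_factor[OF A offd diag sums good] by simp
  have nz: "poly (phi a b (ht v)) x \<noteq> 0" if "v < n" for v using good ht_le that by blast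
  have "poly (char_poly A * (\<Prod>v=0..<n. phi a b (ht v))) x
      = (\<Prod>v=0..<n. poly (phi a b (ht v + 1)) x / poly (phi a b (ht v)) x * poly (phi a b (ht v)) x)"
    by (simp only: poly_mult pc poly_prod prod.distrib[symmetric])
  also have "\<dots> = (\<Prod>v=0..<n. poly (phi a b (ht v + 1)) x)"
    by (rule prod.cong) (use nz in auto)
  finally show "poly (char_poly A * (\<Prod>v=0..<n. phi a b (ht v))) x = poly (\<Prod>v=0..<n. phi a b (ht v + 1)) x"
    by (simp add: poly_prod)
qed

lemma order_id:
  fixes A :: "real mat" and a b :: "nat \<Rightarrow> real"
  assumes A: "A \<in> carrier_mat n n"
    and offd: "\<And>i j. i < n \<Longrightarrow> j < n \<Longrightarrow> i \<noteq> j \<Longrightarrow> A $$ (i,j) \<noteq> 0 \<Longrightarrow> E i j"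
    and diag: "\<And>v. v < n \<Longrightarrow> A $$ (v,v) = a (ht v + 1)"
    and sums: "\<And>v. v < n \<Longrightarrow> \<not> is_leaf n E r v \<Longrightarrow>
        (\<Sum>u\<in>{u. u < n \<and> u \<noteq> r \<and> par u = v}. A $$ (v,u) * A $$ (u,v)) = b (ht v + 1)"
    and bp: "\<And>i. 2 \<le> i \<Longrightarrow> b i > 0"
  shows "order y (char_poly A) + (\<Sum>v=0..<n. order y (phi a b (ht v))) = (\<Sum>v=0..<n. order y (phi a b (ht v + 1)))"
proof -
  have pnz: "\<And>k. phi a b k \<noteq> 0" by (rule phi_nz) (rule bp)
  have cz: "char_poly A \<noteq> 0" using degree_monic_char_poly[OF A] by auto
  have pz: "(\<Prod>v=0..<n. phi a b (ht v)) \<noteq> 0" using pnz by (simp add: prod_zero_iff)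
  have "order y (char_poly A * (\<Prod>v=0..<n. phi a b (ht v))) = order y (\<Prod>v=0..<n. phi a b (ht v + 1))"
    using char_poly_id[OF A offd diag sums bp] by simp
  moreover have "order y (char_poly A * (\<Prod>v=0..<n. phi a b (ht v))) = order y (char_poly A) + (\<Sum>v=0..<n. order y (phi a b (ht v)))"
    using order_mult[of "char_poly A" _ y] cz pz order_prod[of "{0..<n}" "\<lambda>v. phi a b (ht v)"] pnz by simp
  moreover have "order y (\<Prod>v=0..<n. phi a b (ht v + 1)) = (\<Sum>v=0..<n. order y (phi a b (ht v + 1)))"
    using order_prod[of "{0..<n}" "\<lambda>v. phi a b (ht v + 1)"] pnz by simp
  ultimately show ?thesis by simp
qed

end


locale params =
  fixes a1 a2 b2 b3 b4 :: real
  assumes B: "in_B a1 a2 b2 b3 b4"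
begin

abbreviation ca where "ca \<equiv> coef_a a1 a2 b2 b3 b4"
abbreviation cb where "cb \<equiv> coef_b a1 a2 b2 b3 b4"
abbreviation P where "P k x \<equiv> poly (phi ca cb k) x"

lemma dist: "a1 \<noteq> a2" "a1 \<noteq> b2" "a1 \<noteq> b3" "a1 \<noteq> b4" "a2 \<noteq> b2" "a2 \<noteq> b3" "a2 \<noteq> b4"
  "b2 \<noteq> b3" "b2 \<noteq> b4" "b3 \<noteq> b4"
  using B unfolding in_B_def by auto

lemma pos2: "(b2 - a1) * (a1 - a2) > 0"
  using B unfolding in_B_def
  apply (elim disjE conjE)
  apply (auto simp: zero_less_mult_iff zero_less_divide_iff mult_less_0_iff)
  done
lemma pos3: "(b3 - a2) * (b3 - b2) > 0"
  using B unfolding in_B_def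
  apply (elim disjE conjE)
  apply (auto simp: zero_less_mult_iff zero_less_divide_iff mult_less_0_iff)
  done
lemma pos4: "(b4 - a1) * (b3 - b4) * (a2 + b2 - b3 - b4) / (b4 - b2) > 0"
  using B unfolding in_B_def
  apply (elim disjE conjE)
  apply (auto simp: zero_less_mult_iff zero_less_divide_iff mult_less_0_iff)
  done
lemma posg2: "(b2 - a1) * (b2 - a2) > 0"
  using B unfolding in_B_def
  apply (elim disjE conjE)
  apply (auto simp: zero_less_mult_iff zero_less_divide_iff mult_less_0_iff)
  done
lemma posg3: "(b3 - a1) * (b3 - a2) > 0"
  using B unfolding in_B_def
  apply (elim disjE conjE)
  apply (auto simp: zero_less_mult_iff zero_less_divide_iff mult_less_0_iff)
  done
lemma posg4: "(b4 - a1) * (b4 - a2) > 0"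
  using B unfolding in_B_def
  apply (elim disjE conjE)
  apply (auto simp: zero_less_mult_iff zero_less_divide_iff mult_less_0_iff)
  done

lemma bpos: "2 \<le> i \<Longrightarrow> cb i > 0"
  using pos2 pos3 pos4 posg2 posg3 posg4 unfolding coef_b_def Let_def by auto

lemma P0: "P 0 x = 1" by simp
lemma P1: "P (Suc 0) x = x - a1" by (simp add: coef_a_def)
lemma PSS: "P (Suc (Suc k)) x = (x - ca (k+2)) * P (Suc k) x - cb (k+2) * P k x"
  by (rule poly_phiSS)

lemma ca_ge3: "3 \<le> i \<Longrightarrow> ca i = (if odd i then a1 else a2)"
  unfolding coef_a_def by auto

lemma a1_pat: "P k a1 = 0 \<longleftrightarrow> odd k"
proof -
  have "(odd k \<longrightarrow> P k a1 = 0) \<and> (even k \<longrightarrow> P k a1 \<noteq> 0)"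
  proof (induction k rule: nat_less_induct)
    case (1 k)
    show ?case
    proof (cases k)
      case 0 then show ?thesis by simp
    next
      case (Suc j)
      show ?thesis
      proof (cases j)
        case 0 then show ?thesis using Suc P1 by simp
      next
        case (Suc m)
        have ih: "(odd m \<longrightarrow> P m a1 = 0) \<and> (even m \<longrightarrow> P m a1 \<noteq> 0)"
                 "(odd (Suc m) \<longrightarrow> P (Suc m) a1 = 0) \<and> (even (Suc m) \<longrightarrow> P (Suc m) a1 \<noteq> 0)"
          using 1 \<open>k = Suc j\<close> Suc by auto
        have bb: "cb (m+2) > 0" using bpos by simp
        have aa: "odd (m+2) \<Longrightarrow> ca (m+2) = a1" unfolding coef_a_def by auto
        show ?thesis using ih bb aa PSS[of m a1] \<open>k = Suc j\<close> Suc by auto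
      qed
    qed
  qed
  then show ?thesis by blast
qed

lemma a2_pat: "P k a2 = 0 \<longleftrightarrow> even k \<and> 2 \<le> k"
proof -
  have p1: "P 1 a2 \<noteq> 0" using P1 dist by simp
  have p2: "P 2 a2 = 0"
  proof -
    have "P 2 a2 = (a2 - ca 2) * P 1 a2 - cb 2 * P 0 a2" using PSS[of 0 a2] by (simp add: numeral_2_eq_2)
    then show ?thesis by (simp add: coef_a_def coef_b_def algebra_simps)
  qed
  have "(even k \<and> 2 \<le> k \<longrightarrow> P k a2 = 0) \<and> (\<not> (even k \<and> 2 \<le> k) \<longrightarrow> P k a2 \<noteq> 0)"
  proof (induction k rule: nat_less_induct)
    case (1 k)
    consider "k = 0" | "k = 1" | "k = 2" | m where "k = Suc (Suc m)" "1 \<le> m" by (metis One_nat_def less_one linorder_neqE_nat nat_less_le not_less_eq_eq numeral_2_eq_2 Suc_1 not0_implies_Suc)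
    then show ?case
    proof cases
      case 1 then show ?thesis by simp
    next
      case 2 then show ?thesis using p1 by simp
    next
      case 3 then show ?thesis using p2 by simp
    next
      case 4
      have ih: "(even m \<and> 2 \<le> m \<longrightarrow> P m a2 = 0) \<and> (\<not> (even m \<and> 2 \<le> m) \<longrightarrow> P m a2 \<noteq> 0)"
               "(even (Suc m) \<and> 2 \<le> Suc m \<longrightarrow> P (Suc m) a2 = 0) \<and> (\<not> (even (Suc m) \<and> 2 \<le> Suc m) \<longrightarrow> P (Suc m) a2 \<noteq> 0)"
        using 1 4 by auto
      have bb: "cb (m+2) > 0" using bpos by simp
      have aa: "ca (m+2) = (if odd (m+2) then a1 else a2)" using ca_ge3 4 by simp
      show ?thesis using ih bb aa PSS[of m a2] 4 dist by auto
    qed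
  qed
  then show ?thesis by blast
qed

lemma prop3:
  assumes xa: "x \<noteq> a1" "x \<noteq> a2" and j: "2 \<le> j"
    and bb: "\<And>m. 5 \<le> m \<Longrightarrow> m mod 3 = j mod 3 \<Longrightarrow> cb m = (x - a1) * (x - a2)"
    and base: "P j x = 0" "P (j+1) x \<noteq> 0" "P (j+2) x \<noteq> 0"
  shows "P (j + 3*m) x = 0 \<and> P (j + 3*m + 1) x \<noteq> 0 \<and> P (j + 3*m + 2) x \<noteq> 0"
proof (induction m)
  case 0 then show ?case using base by simp
next
  case (Suc m)
  define k where "k = j + 3*m"
  have I: "P k x = 0" "P (k+1) x \<noteq> 0" "P (k+2) x \<noteq> 0" using Suc unfolding k_def by auto
  have a2': "ca (k+2) = (if odd (k+2) then a1 else a2)" "ca (k+3) = (if odd (k+3) then a1 else a2)"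
      "ca (k+4) = (if odd (k+4) then a1 else a2)" "ca (k+5) = (if odd (k+5) then a1 else a2)"
    using ca_ge3 j unfolding k_def by auto
  have b3: "cb (k+3) = (x - a1) * (x - a2)" using bb j unfolding k_def by auto
  have b4: "cb (k+4) > 0" using bpos by simp
  have e2: "P (k+2) x = (x - ca (k+2)) * P (k+1) x"
    using PSS[of k x] I by (simp add: numeral_eq_Suc)
  have e3: "P (k+3) x = (x - ca (k+3)) * P (k+2) x - cb (k+3) * P (k+1) x"
    using PSS[of "k+1" x] by (simp add: numeral_eq_Suc)
  have z3: "P (k+3) x = 0"
  proof -
    have "(x - ca (k+3)) * (x - ca (k+2)) = (x - a1) * (x - a2)"
      using a2' by (cases "odd k") (auto simp: algebra_simps)
    moreover have "P (k+3) x = ((x - ca (k+3)) * (x - ca (k+2)) - cb (k+3)) * P (k+1) x"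
      unfolding e3 e2 by (simp add: algebra_simps del: phi.simps)
    ultimately show ?thesis using b3 by (simp del: phi.simps)
  qed
  have e4: "P (k+4) x = (x - ca (k+4)) * P (k+3) x - cb (k+4) * P (k+2) x"
    using PSS[of "k+2" x] by (simp add: numeral_eq_Suc)
  have n4: "P (k+4) x \<noteq> 0" using e4 z3 b4 I by simp
  have e5: "P (k+5) x = (x - ca (k+5)) * P (k+4) x - cb (k+5) * P (k+3) x"
    using PSS[of "k+3" x] by (simp add: numeral_eq_Suc)
  have n5: "P (k+5) x \<noteq> 0" using e5 z3 n4 a2' xa by auto
  show ?case using z3 n4 n5 unfolding k_def by (simp add: algebra_simps)
qed

lemma pat3:
  assumes xa: "x \<noteq> a1" "x \<noteq> a2" and j: "2 \<le> j"
    and bb: "\<And>m. 5 \<le> m \<Longrightarrow> m mod 3 = j mod 3 \<Longrightarrow> cb m = (x - a1) * (x - a2)"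
    and base: "P j x = 0" "P (j+1) x \<noteq> 0" "P (j+2) x \<noteq> 0"
    and k: "j \<le> k"
  shows "P k x = 0 \<longleftrightarrow> k mod 3 = j mod 3"
proof -
  define m where "m = (k - j) div 3"
  define s where "s = (k - j) mod 3"
  have k': "k = j + 3*m + s" and s: "s < 3" unfolding m_def s_def using k by auto
  note pr = prop3[OF xa j bb base, of m]
  consider "s = 0" | "s = 1" | "s = 2" using s by linarith
  then show ?thesis
  proof cases
    case 1 then show ?thesis using pr k' by simp
  next
    case 2
    have "k mod 3 \<noteq> j mod 3" using k' 2 by presburger
    then show ?thesis using pr k' 2 by (simp del: phi.simps)
  next
    case 3
    have "k mod 3 \<noteq> j mod 3" using k' 3 by presburger
    then show ?thesis using pr k' 3 by (simp add: add.assoc del: phi.simps)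
  qed
qed

end


context params begin

lemma PN: "P (k+2) x = (x - ca (k+2)) * P (k+1) x - cb (k+2) * P k x"
  using PSS[of k x] by (simp del: phi.simps)

lemma P1': "P 1 x = x - a1" using P1 by simp
lemma PM: assumes "2 \<le> m" shows "P m x = (x - ca m) * P (m - 1) x - cb m * P (m - 2) x"
proof -
  obtain k where m: "m = Suc (Suc k)" using assms by (metis add_2_eq_Suc le_Suc_ex)
  show ?thesis using PSS[of k x] unfolding m by (simp del: phi.simps)
qed
lemma P2g: "P 2 x = (x + a1 - a2 - b2) * (x - a1) - (b2 - a1) * (a1 - a2)"
proof -
  have "P 2 x = (x - ca 2) * P (Suc 0) x - cb 2 * P 0 x" using PM[of 2 x] by (simp del: phi.simps)
  also have "\<dots> = (x - ca 2) * (x - a1) - cb 2" by (simp only: P1 poly_phi0 mult_1_right)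
  finally show ?thesis by (simp add: coef_a_def coef_b_def algebra_simps)
qed
lemma P3g: "P 3 x = (x - a1) * P 2 x - cb 3 * (x - a1)"
proof -
  have "P 3 x = (x - ca 3) * P 2 x - cb 3 * P (Suc 0) x" using PM[of 3 x] by (simp del: phi.simps)
  then show ?thesis by (simp only: P1) (simp add: coef_a_def)
qed
lemma P4g: "P 4 x = (x - a2) * P 3 x - cb 4 * P 2 x"
  using PM[of 4 x] by (simp add: coef_a_def del: phi.simps)
lemma P5g: "P 5 x = (x - a1) * P 4 x - cb 5 * P 3 x"
  using PM[of 5 x] by (simp add: coef_a_def del: phi.simps)
lemma P6g: "P 6 x = (x - a2) * P 5 x - cb 6 * P 4 x"
  using PM[of 6 x] by (simp add: coef_a_def del: phi.simps)

lemma cbg: "5 \<le> m \<Longrightarrow> cb m = (let bj = (if m mod 3 = 2 then b2 else if m mod 3 = 0 then b3 else b4)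
            in (bj - a1) * (bj - a2))"
  unfolding coef_b_def by auto

lemma b2_pat: "P k b2 = 0 \<longleftrightarrow> k mod 3 = 2"
proof -
  have p2: "P 2 b2 = 0" using P2g[of b2] by (simp add: algebra_simps)
  have p1: "P 1 b2 \<noteq> 0" using P1' dist by simp
  have p3: "P 3 b2 \<noteq> 0" using P3g[of b2] p2 bpos[of 3] dist by simp
  have p4: "P 4 b2 \<noteq> 0" using P4g[of b2] p2 p3 dist by simp
  have bb: "cb m = (b2 - a1) * (b2 - a2)" if "5 \<le> m" "m mod 3 = 2 mod 3" for m
    using cbg[OF that(1)] that by simp
  show ?thesis
  proof (cases "2 \<le> k")
    case True
    show ?thesis using pat3[of b2 2, OF _ _ _ bb _ _ _ True] dist p2 p3 p4 by simp
  next
    case False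
    then have "k = 0 \<or> k = 1" by auto
    then show ?thesis using p1 by auto
  qed
qed

lemma b3_pat: "P k b3 = 0 \<longleftrightarrow> k mod 3 = 0 \<and> 3 \<le> k"
proof -
  have c3: "cb 3 = (b3 - a2) * (b3 - b2)" unfolding coef_b_def by simp
  have p2: "P 2 b3 = cb 3" using P2g[of b3] c3 by (simp add: algebra_simps)
  have p3: "P 3 b3 = 0" using P3g[of b3] p2 by simp
  have p1: "P 1 b3 \<noteq> 0" using P1' dist by simp
  have p2': "P 2 b3 \<noteq> 0" using p2 bpos[of 3] by simp
  have p4: "P 4 b3 \<noteq> 0" using P4g[of b3] p3 p2' bpos[of 4] by simp
  have p5: "P 5 b3 \<noteq> 0" using P5g[of b3] p3 p4 dist by simp
  have bb: "cb m = (b3 - a1) * (b3 - a2)" if "5 \<le> m" "m mod 3 = 3 mod 3" for m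
    using cbg[OF that(1)] that by simp
  show ?thesis
  proof (cases "3 \<le> k")
    case True
    show ?thesis using pat3[of b3 3, OF _ _ _ bb _ _ _ True] dist p3 p4 p5 True by simp
  next
    case False
    then have "k = 0 \<or> k = 1 \<or> k = 2" by auto
    then show ?thesis using p1 p2' by auto
  qed
qed

lemma b4_pat: "P k b4 = 0 \<longleftrightarrow> k mod 3 = 1 \<and> 4 \<le> k"
proof -
  have c4: "cb 4 = (b4 - a1) * (b3 - b4) * (a2 + b2 - b3 - b4) / (b4 - b2)" unfolding coef_b_def by simp
  have c3: "cb 3 = (b3 - a2) * (b3 - b2)" unfolding coef_b_def by simp
  have w: "a2 + b2 - b3 - b4 \<noteq> 0" using pos4 by auto
  have p1: "P 1 b4 \<noteq> 0" using P1' dist by simp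
  have p2v: "P 2 b4 = (b4 - a2) * (b4 - b2)" using P2g[of b4] by (simp add: algebra_simps)
  have p2: "P 2 b4 \<noteq> 0" using p2v dist by simp
  have p3v: "P 3 b4 = (b4 - a1) * (b4 - b3) * (b4 + b3 - a2 - b2)"
    using P3g[of b4] p2v c3 by (simp add: algebra_simps)
  have w2: "b4 + b3 - a2 - b2 \<noteq> 0"
  proof
    assume "b4 + b3 - a2 - b2 = 0"
    then have "a2 + b2 - b3 - b4 = 0" by linarith
    with w show False by simp
  qed
  have p3: "P 3 b4 \<noteq> 0" using p3v dist w2 by simp
  have p4: "P 4 b4 = 0"
  proof -
    have "b4 - b2 \<noteq> 0" using dist by simp
    then show ?thesis using P4g[of b4] p3v p2v c4 by (simp add: field_simps)
  qed
  have p5: "P 5 b4 \<noteq> 0" using P5g[of b4] p4 p3 bpos[of 5] by simp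
  have p6: "P 6 b4 \<noteq> 0" using P6g[of b4] p4 p5 dist by simp
  have bb: "cb m = (b4 - a1) * (b4 - a2)" if "5 \<le> m" "m mod 3 = 4 mod 3" for m
    using cbg[OF that(1)] that by simp
  show ?thesis
  proof (cases "4 \<le> k")
    case True
    show ?thesis using pat3[of b4 4, OF _ _ _ bb _ _ _ True] dist p4 p5 p6 True by simp
  next
    case False
    then have "k = 0 \<or> k = 1 \<or> k = 2 \<or> k = 3" by auto
    then show ?thesis using p1 p2 p3 by auto
  qed
qed

end


lemma tele: fixes ov c :: "nat \<Rightarrow> int"
  shows "(\<Sum>i\<in>{1..m}. ov i * (c (i-1) - c i)) = (\<Sum>k<m. c k * (ov (Suc k) - ov k)) + ov 0 * c 0 - ov m * c m"
proof (induction m)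
  case 0 then show ?case by simp
next
  case (Suc m)
  have "(\<Sum>i\<in>{1..Suc m}. ov i * (c (i-1) - c i)) = (\<Sum>i\<in>{1..m}. ov i * (c (i-1) - c i)) + ov (Suc m) * (c m - c (Suc m))"
    by (simp add: sum.cl_ivl_Suc)
  then show ?case using Suc by (simp add: algebra_simps)
qed

lemma sel: fixes ov :: "nat \<Rightarrow> nat" and f :: "nat \<Rightarrow> int"
  assumes ov: "\<And>i. i \<in> {1..N} \<Longrightarrow> ov i = (if i \<in> I then 1 else 0)" and I: "I \<subseteq> {1..N}"
  shows "(\<Sum>i\<in>{1..N}. int (ov i) * f i) = (\<Sum>i\<in>I. f i)"
proof -
  have "(\<Sum>i\<in>{1..N}. int (ov i) * f i) = (\<Sum>i\<in>{1..N}. if i \<in> I then f i else 0)"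
    by (rule sum.cong) (use ov in auto)
  also have "\<dots> = (\<Sum>i\<in>{1..N} \<inter> I. f i)" by (simp add: sum.inter_restrict)
  also have "{1..N} \<inter> I = I" using I by auto
  finally show ?thesis .
qed

context hedge begin

lemma group_ht: "(\<Sum>v=0..<n. g (ht v)) = (\<Sum>k<Suc (ht r). int (card (level_set n E r k)) * g k)"
  for g :: "nat \<Rightarrow> int"
proof -
  have inner: "(\<Sum>v\<in>{v. v \<in> {0..<n} \<and> ht v = k}. g (ht v)) = int (card (level_set n E r k)) * g k" for k
  proof -
    have "(\<Sum>v\<in>{v. v \<in> {0..<n} \<and> ht v = k}. g (ht v)) = (\<Sum>v\<in>level_set n E r k. g k)"
      by (rule sum.cong) (auto simp: level_set_def)
    then show ?thesis by simp
  qed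
  have "(\<Sum>v=0..<n. g (ht v)) = (\<Sum>k<Suc (ht r). (\<Sum>v\<in>{v. v \<in> {0..<n} \<and> ht v = k}. g (ht v)))"
    by (rule sum.group[symmetric]) (use ht_le in \<open>auto simp: less_Suc_eq_le\<close>)
  also have "\<dots> = (\<Sum>k<Suc (ht r). int (card (level_set n E r k)) * g k)"
    by (rule sum.cong[OF refl]) (rule inner)
  finally show ?thesis .
qed

lemma mult_count:
  fixes ov :: "nat \<Rightarrow> nat" and m :: nat
  assumes eq: "m + (\<Sum>v=0..<n. ov (ht v)) = (\<Sum>v=0..<n. ov (ht v + 1))"
    and o0: "ov 0 = 0"
  shows "int m = (\<Sum>i\<in>{1..ht r + 1}. int (ov i) * ell n E r i)"
proof -
  define c where "c k = int (card (level_set n E r k))" for k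
  have cH: "c (Suc (ht r)) = 0"
  proof -
    have "level_set n E r (Suc (ht r)) = {}" unfolding level_set_def using ht_le by fastforce
    then show ?thesis unfolding c_def by simp
  qed
  have e1: "int (\<Sum>v=0..<n. ov (ht v)) = (\<Sum>k<Suc (ht r). c k * int (ov k))"
    using group_ht[of "\<lambda>k. int (ov k)"] unfolding c_def by simp
  have e2: "int (\<Sum>v=0..<n. ov (ht v + 1)) = (\<Sum>k<Suc (ht r). c k * int (ov (Suc k)))"
    using group_ht[of "\<lambda>k. int (ov (Suc k))"] unfolding c_def by simp
  have "int m = (\<Sum>k<Suc (ht r). c k * int (ov (Suc k))) - (\<Sum>k<Suc (ht r). c k * int (ov k))"
    using arg_cong[OF eq, of int] e1 e2 by simp
  also have "\<dots> = (\<Sum>k<Suc (ht r). c k * (int (ov (Suc k)) - int (ov k)))"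
    by (simp add: sum_subtractf algebra_simps)
  also have "\<dots> = (\<Sum>i\<in>{1..Suc (ht r)}. int (ov i) * (c (i-1) - c i))"
    using tele[of "\<lambda>i. int (ov i)" c "Suc (ht r)"] o0 cH by simp
  also have "\<dots> = (\<Sum>i\<in>{1..ht r + 1}. int (ov i) * ell n E r i)"
    unfolding ell_def c_def by simp
  finally show ?thesis .
qed

end

theorem mainTheorem6:
  fixes n r :: nat and E :: "nat \<Rightarrow> nat \<Rightarrow> bool" and H :: nat
    and a1 a2 b2 b3 b4 :: real and A :: "real mat"
  assumes "is_hedge n E r"
    and "H = vheight n E r r"
    and "in_B a1 a2 b2 b3 b4"
    and "A \<in> PH (C_Lambda a1 a2 b2 b3 b4 (H + 1)) n E r"
  shows "(\<forall>j\<in>{1, 2}. int (mult (if j = 1 then a1 else a2) A)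
            = (\<Sum>i\<in>{i. j \<le> i \<and> i \<le> H + 1 \<and> i mod 2 = j mod 2}. ell n E r i))
       \<and> (\<forall>j\<in>{2, 3, 4}. int (mult (if j = 2 then b2 else if j = 3 then b3 else b4) A)
            = (\<Sum>i\<in>{i. j \<le> i \<and> i \<le> H + 1 \<and> i mod 3 = j mod 3}. ell n E r i))"
proof -
  interpret hedge n E r
    using assms(1) unfolding is_hedge_def is_rooted_tree_def by unfold_locales auto
  interpret params a1 a2 b2 b3 b4 by unfold_locales (rule assms(3))
  define C where "C = C_Lambda a1 a2 b2 b3 b4 (H + 1)"
  have HH: "H = ht r" using assms(2) by simp
  have inR: "in_R n E A" and dg: "\<And>v. v < n \<Longrightarrow> A $$ (v, v) = C $$ (H - ht v, H - ht v)"
    and sm: "\<And>v. v < n \<Longrightarrow> \<not> is_leaf n E r v \<Longrightarrow>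
          (\<Sum>u\<in>{u. u < n \<and> is_child E r u v}. A $$ (v, u) * A $$ (u, v))
            = C $$ (H - ht v, H - ht v + 1) * C $$ (H - ht v + 1, H - ht v)"
    using assms(4) unfolding PH_def C_def Let_def HH by auto
  have A: "A \<in> carrier_mat n n" using inR unfolding in_R_def by simp
  have offd: "\<And>i j. i < n \<Longrightarrow> j < n \<Longrightarrow> i \<noteq> j \<Longrightarrow> A $$ (i,j) \<noteq> 0 \<Longrightarrow> E i j"
    using inR unfolding in_R_def by blast
  have diag: "A $$ (v,v) = ca (ht v + 1)" if v: "v < n" for v
  proof -
    have "ht v \<le> H" using ht_le v HH by simp
    then show ?thesis using dg[OF v] unfolding C_def C_Lambda_def by simp
  qed
  have sums: "(\<Sum>u\<in>{u. u < n \<and> u \<noteq> r \<and> par u = v}. A $$ (v,u) * A $$ (u,v)) = cb (ht v + 1)"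
    if v: "v < n" and nl: "\<not> is_leaf n E r v" for v
  proof -
    have h1: "1 \<le> ht v" using ht_nonleaf[OF v nl] .
    have h2: "ht v \<le> H" using ht_le v HH by simp
    have "C $$ (H - ht v, H - ht v + 1) = cb (ht v + 1)"
      unfolding C_def C_Lambda_def using h1 h2 by simp
    moreover have "C $$ (H - ht v + 1, H - ht v) = 1"
      unfolding C_def C_Lambda_def using h1 h2 by simp
    ultimately show ?thesis using sm[OF v nl] children[OF v] by simp
  qed
  have bp: "\<And>i. 2 \<le> i \<Longrightarrow> cb i > 0" by (rule bpos)
  have key: "int (mult y A) = (\<Sum>i\<in>I. ell n E r i)"
    if pat: "\<And>i. i \<in> {1..H+1} \<Longrightarrow> (P i y = 0 \<longleftrightarrow> i \<in> I)" and I: "I \<subseteq> {1..H+1}" for y I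
  proof -
    define ov where "ov k = order y (phi ca cb k)" for k
    have ok: "ov k = (if P k y = 0 then 1 else 0)" for k unfolding ov_def by (rule phi_order) (rule bp)
    have o0: "ov 0 = 0" using ok[of 0] by simp
    have oid: "order y (char_poly A) + (\<Sum>v=0..<n. ov (ht v)) = (\<Sum>v=0..<n. ov (ht v + 1))"
      unfolding ov_def using A offd diag sums bp by (rule order_id)
    have "int (mult y A) = (\<Sum>i\<in>{1..ht r + 1}. int (ov i) * ell n E r i)"
      unfolding mult_def using oid o0 by (rule mult_count)
    also have "\<dots> = (\<Sum>i\<in>I. ell n E r i)"
      by (rule sel) (use ok pat I HH in auto)
    finally show ?thesis .
  qed
  have k1: "int (mult a1 A) = (\<Sum>i\<in>{i. 1 \<le> i \<and> i \<le> H + 1 \<and> i mod 2 = 1 mod 2}. ell n E r i)"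
    by (rule key) (auto simp: a1_pat odd_iff_mod_2_eq_one)
  have k2: "int (mult a2 A) = (\<Sum>i\<in>{i. 2 \<le> i \<and> i \<le> H + 1 \<and> i mod 2 = 2 mod 2}. ell n E r i)"
    by (rule key) (auto simp: a2_pat even_iff_mod_2_eq_zero)
  have k3: "int (mult b2 A) = (\<Sum>i\<in>{i. 2 \<le> i \<and> i \<le> H + 1 \<and> i mod 3 = 2 mod 3}. ell n E r i)"
    by (rule key) (auto simp: b2_pat)
  have k4: "int (mult b3 A) = (\<Sum>i\<in>{i. 3 \<le> i \<and> i \<le> H + 1 \<and> i mod 3 = 3 mod 3}. ell n E r i)"
    by (rule key) (auto simp: b3_pat)
  have k5: "int (mult b4 A) = (\<Sum>i\<in>{i. 4 \<le> i \<and> i \<le> H + 1 \<and> i mod 3 = 4 mod 3}. ell n E r i)"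
    by (rule key) (auto simp: b4_pat)
  show ?thesis using k1 k2 k3 k4 k5 by simp
qed


end
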